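(* Let $G$ be a bipartite graph with $n$ vertices and $m$ edges, and let $\eta$ be the nullity of $G$. Then $$S_{k}(A(G))\leq \begin{cases} \sqrt{km}, & \text{if } 1\leq k \leq \left\lfloor\frac{n-\eta}{2}\right\rfloor;\\ \sqrt{\left\lfloor\frac{n-\eta}{2}\right\rfloor m}, & \text{if } \left\lfloor\frac{n-\eta}{2}\right\rfloor< k \leq \left\lfloor\frac{n+\eta}{2}\right\rfloor;\\ \sqrt{(n-k)m}, & \text{if } \left\lfloor\frac{n+\eta}{2}\right\rfloor< k \leq n. \end{cases}$$
   Context: All graphs are simple and undirected. $A(G)$ is the adjacency matrix. The nullity of $G$ is the multiplicity of the eigenvalue $0$ of $A(G)$. For a real symmetric matrix $M$ with eigenvalues $\lambda_1(M)\geq\cdots\geq\lambda_n(M)$, $S_k(M)=\sum_{i=1}^k\lambda_i(M)$. *)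

theory Defs
  imports "Jordan_Normal_Form.Char_Poly" "HOL-Library.Multiset"
begin

definition simple_graph :: "nat \<Rightarrow> (nat \<Rightarrow> nat \<Rightarrow> bool) \<Rightarrow> bool" where
  "simple_graph n E \<longleftrightarrow> (\<forall>i j. E i j \<longrightarrow> i < n \<and> j < n \<and> i \<noteq> j) \<and> (\<forall>i j. E i j \<longrightarrow> E j i)"

definition bipartite :: "nat \<Rightarrow> (nat \<Rightarrow> nat \<Rightarrow> bool) \<Rightarrow> bool" where
  "bipartite n E \<longleftrightarrow> (\<exists>X. X \<subseteq> {0..<n} \<and> (\<forall>i j. E i j \<longrightarrow> (i \<in> X \<longleftrightarrow> j \<notin> X)))"

definition num_edges :: "nat \<Rightarrow> (nat \<Rightarrow> nat \<Rightarrow> bool) \<Rightarrow> nat" where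
  "num_edges n E = card {{i, j} | i j. i < n \<and> j < n \<and> E i j}"

definition adj_matrix :: "nat \<Rightarrow> (nat \<Rightarrow> nat \<Rightarrow> bool) \<Rightarrow> real mat" where
  "adj_matrix n E = mat n n (\<lambda>(i, j). if E i j then 1 else 0)"

definition eig_mset :: "real mat \<Rightarrow> real multiset" where
  "eig_mset A = (\<Sum>x\<in>{x. poly (char_poly A) x = 0}. replicate_mset (order x (char_poly A)) x)"

definition eigenvalues_desc :: "real mat \<Rightarrow> real list" where
  "eigenvalues_desc A = rev (sorted_list_of_multiset (eig_mset A))"

definition S_k :: "nat \<Rightarrow> real mat \<Rightarrow> real" where
  "S_k k A = sum_list (take k (eigenvalues_desc A))"

definition nullity :: "nat \<Rightarrow> (nat \<Rightarrow> nat \<Rightarrow> bool) \<Rightarrow> nat" where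
  "nullity n E = count (eig_mset (adj_matrix n E)) 0"

end

theory Submission
  imports Defs "Jordan_Normal_Form.Schur_Decomposition"
begin

lemma order_linear_prod:
  fixes es :: "'a::idom list"
  shows "Polynomial.order x (\<Prod>e\<leftarrow>es. [:-e,1:]) = count (mset es) x"
proof (induction es)
  case Nil
  then show ?case by simp
next
  case (Cons e es)
  have nz: "(\<Prod>e\<leftarrow>es. [:-e,1:]) \<noteq> 0"
    by (auto simp: prod_list_zero_iff)
  have o1: "Polynomial.order x [:-e,1:] = (if x = e then 1 else 0)"
  proof (cases "x = e")
    case True
    then show ?thesis using order_power_n_n[of e 1] by simp
  next
    case False
    then show ?thesis by (simp add: order_0I)
  qed
  have "Polynomial.order x ([:-e,1:] * (\<Prod>e\<leftarrow>es. [:-e,1:])) = Polynomial.order x [:-e,1:] + Polynomial.order x (\<Prod>e\<leftarrow>es. [:-e,1:])"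
  proof (rule order_mult)
    have "[:-e,1:] \<noteq> (0::'a poly)" by simp
    then show "[:-e,1:] * (\<Prod>e\<leftarrow>es. [:-e,1:]) \<noteq> 0" using nz by (simp only: mult_eq_0_iff) simp
  qed
  then show ?case using Cons o1 by simp
qed

lemma sum_replicate_count:
  assumes "finite S" "set_mset M \<subseteq> S"
  shows "(\<Sum>x\<in>S. replicate_mset (count M x) x) = M"
proof (rule multiset_eqI)
  fix y
  show "count (\<Sum>x\<in>S. replicate_mset (count M x) x) y = count M y"
    using assms by (auto simp: count_sum count_replicate_mset sum.delta sum.delta' not_in_iff)
qed

lemma eig_mset_linear:
  assumes "char_poly A = (\<Prod>e\<leftarrow>es. [:-e,1:])"
  shows "eig_mset A = mset es"
proof -
  have "{x. poly (char_poly A) x = 0} = set es"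
    unfolding assms by (auto simp: poly_prod_list_zero_iff)
  then show ?thesis unfolding eig_mset_def using assms
    by (simp add: order_linear_prod sum_replicate_count)
qed



lemma sym_real_eig:
  fixes A :: "real mat"
  assumes A: "A \<in> carrier_mat n n" and sym: "\<And>i j. i<n \<Longrightarrow> j<n \<Longrightarrow> A$$(i,j) = A$$(j,i)"
  and ev: "eigenvalue (map_mat complex_of_real A) a"
  shows "Im a = 0"
proof -
  let ?C = "map_mat complex_of_real A"
  from ev obtain v where "eigenvector ?C v a" unfolding eigenvalue_def by blast
  hence v: "v \<in> carrier_vec n" "v \<noteq> 0\<^sub>v n" "?C *\<^sub>v v = a \<cdot>\<^sub>v v" using A by (auto simp: eigenvector_def)
  define w where "w i = v $ i" for i
  have eq: "(\<Sum>j=0..<n. of_real (A$$(i,j)) * w j) = a * w i" if "i<n" for i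
  proof -
    have "(?C *\<^sub>v v) $ i = (a \<cdot>\<^sub>v v) $ i" using v(3) by simp
    thus ?thesis using that A v(1) by (simp add: w_def scalar_prod_def row_def)
  qed
  define s where "s = (\<Sum>i=0..<n. cnj (w i) * (\<Sum>j=0..<n. of_real (A$$(i,j)) * w j))"
  define r where "r = (\<Sum>i=0..<n. (cmod (w i))^2)"
  have s1: "s = a * of_real r"
  proof -
    have "s = (\<Sum>i=0..<n. a * (w i * cnj (w i)))" unfolding s_def
    proof (rule sum.cong[OF refl])
      fix i assume "i \<in> {0..<n}"
      then show "cnj (w i) * (\<Sum>j=0..<n. of_real (A$$(i,j)) * w j) = a * (w i * cnj (w i))"
        by (subst eq) (auto simp: ac_simps)
    qed
    also have "\<dots> = a * of_real r" unfolding r_def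
      by (simp add: sum_distrib_left complex_norm_square[symmetric])
    finally show ?thesis .
  qed
  have s2: "cnj s = s"
  proof -
    have "cnj s = (\<Sum>i=0..<n. \<Sum>j=0..<n. w i * of_real (A$$(i,j)) * cnj (w j))"
      unfolding s_def by (simp add: cnj_sum sum_distrib_left ac_simps)
    also have "\<dots> = (\<Sum>j=0..<n. \<Sum>i=0..<n. w i * of_real (A$$(i,j)) * cnj (w j))"
      by (rule sum.swap)
    also have "\<dots> = s" unfolding s_def sum_distrib_left
      by (intro sum.cong refl) (auto simp: sym ac_simps)
    finally show ?thesis .
  qed
  have "Im s = 0" using s2 by (metis complex_cnj_cancel_iff complex_is_Real_iff Reals_cnj_iff)
  hence "Im a * r = 0" using s1 by simp
  moreover have "r > 0"
  proof -
    from v(1,2) obtain i where i: "i < n" "w i \<noteq> 0" unfolding w_def by (auto simp: vec_eq_iff)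
    have "(cmod (w i))^2 \<le> r" unfolding r_def
      by (rule member_le_sum) (use i in auto)
    moreover have "(cmod (w i))^2 > 0" using i by simp
    ultimately show ?thesis by linarith
  qed
  ultimately show ?thesis by simp
qed

lemma map_poly_of_real_prod:
  assumes "\<forall>a\<in>set as. Im a = 0"
  shows "map_poly complex_of_real (\<Prod>e\<leftarrow>map Re as. [:-e,1:]) = (\<Prod>a\<leftarrow>as. [:-a,1:])"
  using assms
proof (induction as)
  case Nil
  then show ?case by simp
next
  case (Cons a as)
  interpret h: map_poly_inj_idom_hom "complex_of_real" ..
  have ra: "complex_of_real (Re a) = a" using Cons.prems by (simp add: complex_eq_iff)
  have "map_poly complex_of_real (\<Prod>e\<leftarrow>map Re (a # as). [:-e,1:]) =
     map_poly complex_of_real [:-Re a,1:] * map_poly complex_of_real (\<Prod>e\<leftarrow>map Re as. [:-e,1:])"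
    by (simp only: list.map prod_list.Cons h.hom_mult)
  also have "\<dots> = [:-a,1:] * (\<Prod>a\<leftarrow>as. [:-a,1:])"
    using Cons ra by simp
  finally show ?case by simp
qed

lemma sym_split:
  fixes A :: "real mat"
  assumes A: "A \<in> carrier_mat n n" and sym: "\<And>i j. i<n \<Longrightarrow> j<n \<Longrightarrow> A$$(i,j) = A$$(j,i)"
  shows "\<exists>es. length es = n \<and> char_poly A = (\<Prod>e\<leftarrow>es. [:-e,1:])"
proof -
  interpret h: map_poly_inj_idom_hom "complex_of_real" ..
  let ?C = "map_mat complex_of_real A"
  have C: "?C \<in> carrier_mat n n" using A by simp
  obtain as where as: "char_poly ?C = (\<Prod>a\<leftarrow>as. [:-a,1:])" "length as = n"
    using char_poly_factorized[OF C] by blast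
  have re: "\<forall>a\<in>set as. Im a = 0"
  proof
    fix a assume "a \<in> set as"
    then have "poly (char_poly ?C) a = 0" unfolding as(1) by (auto simp: poly_prod_list_zero_iff)
    then have "eigenvalue ?C a" using eigenvalue_root_char_poly[OF C] by simp
    then show "Im a = 0" using sym_real_eig[OF A sym, of a] by simp
  qed
  have "map_poly complex_of_real (char_poly A) = char_poly ?C"
    by (rule of_real_hom.char_poly_hom[OF A, symmetric])
  also have "\<dots> = map_poly complex_of_real (\<Prod>e\<leftarrow>map Re as. [:-e,1:])"
    unfolding as(1) using map_poly_of_real_prod[OF re] by simp
  finally have "char_poly A = (\<Prod>e\<leftarrow>map Re as. [:-e,1:])" by simp
  then show ?thesis using as(2) by (intro exI[of _ "map Re as"]) simp
qed



definition tr :: "real mat \<Rightarrow> real" where "tr M = (\<Sum>i=0..<dim_row M. M$$(i,i))"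

lemma tr_comm:
  assumes X: "X \<in> carrier_mat n m" and Y: "Y \<in> carrier_mat m n"
  shows "tr (X * Y) = tr (Y * X)"
proof -
  have "tr (X * Y) = (\<Sum>i=0..<n. \<Sum>k=0..<m. X$$(i,k) * Y$$(k,i))"
    using X Y by (simp add: tr_def scalar_prod_def)
  also have "\<dots> = (\<Sum>k=0..<m. \<Sum>i=0..<n. Y$$(k,i) * X$$(i,k))"
    by (subst sum.swap) (simp add: ac_simps)
  also have "\<dots> = tr (Y * X)"
    using X Y by (simp add: tr_def scalar_prod_def)
  finally show ?thesis .
qed

lemma schur_facts:
  fixes A :: "real mat"
  assumes A: "A \<in> carrier_mat n n" and cp: "char_poly A = (\<Prod>e\<leftarrow>es. [:-e,1:])"
  shows "char_poly (-A) = (\<Prod>e\<leftarrow>map uminus es. [:-e,1:])"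
    and "tr (A * A) = (\<Sum>e\<leftarrow>es. e^2)"
proof -
  obtain B P Q where sd: "schur_decomposition A es = (B,P,Q)"
    by (cases "schur_decomposition A es") auto
  from schur_decomposition[OF A cp sd]
  have wit: "similar_mat_wit A B P Q" and ut: "upper_triangular B" and dg: "diag_mat B = es" by auto
  note W = similar_mat_witD2[OF A wit]
  have nB: "-B \<in> carrier_mat n n" using W by simp
  have "similar_mat_wit (-A) (-B) P Q"
    using W unfolding similar_mat_wit_def Let_def
    by (auto simp: mult_carrier_mat)
  then have "char_poly (-A) = char_poly (-B)"
    by (intro char_poly_similar) (auto simp: similar_mat_def)
  also have "\<dots> = (\<Prod>e\<leftarrow>diag_mat (-B). [:-e,1:])"
    by (rule char_poly_upper_triangular[OF nB]) (use ut W in \<open>auto simp: upper_triangular_def\<close>)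
  also have "diag_mat (-B) = map uminus es" using dg W by (auto simp: diag_mat_def)
  finally show "char_poly (-A) = (\<Prod>e\<leftarrow>map uminus es. [:-e,1:])" .
  have BQ: "B * Q \<in> carrier_mat n n" using W by simp
  have e1: "(B*Q)*(P*(B*Q)) = B*(B*Q)"
  proof -
    have "(B*Q)*(P*(B*Q)) = B*(Q*(P*(B*Q)))"
      using W BQ by (intro assoc_mult_mat) auto
    also have "Q*(P*(B*Q)) = (Q*P)*(B*Q)"
      using W BQ by (intro assoc_mult_mat[symmetric]) auto
    also have "\<dots> = B*Q" using W BQ by simp
    finally show ?thesis .
  qed
  have "A * A = P * (B * (B * Q))"
  proof -
    have "A * A = (P*(B*Q))*(P*(B*Q))" using W by simp
    also have "\<dots> = P*((B*Q)*(P*(B*Q)))"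
      using W BQ by (intro assoc_mult_mat) auto
    finally show ?thesis using e1 by simp
  qed
  then have "tr (A * A) = tr ((B * (B * Q)) * P)"
    using tr_comm[of P n n "B * (B * Q)"] W by simp
  also have "(B * (B * Q)) * P = B * B"
  proof -
    have "(B * (B * Q)) * P = B * ((B * Q) * P)" using W by (intro assoc_mult_mat) auto
    also have "(B * Q) * P = B * (Q * P)" using W by (intro assoc_mult_mat) auto
    finally show ?thesis using W by simp
  qed
  also have "tr (B * B) = (\<Sum>i=0..<n. (B$$(i,i))^2)"
  proof -
    have "tr (B * B) = (\<Sum>i=0..<n. \<Sum>k=0..<n. B$$(i,k) * B$$(k,i))"
      using W by (simp add: tr_def scalar_prod_def)
    also have "\<dots> = (\<Sum>i=0..<n. \<Sum>k=0..<n. if k = i then (B$$(i,i))^2 else 0)"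
    proof (intro sum.cong refl)
      fix i k assume "i \<in> {0..<n}" "k \<in> {0..<n}"
      then show "B$$(i,k) * B$$(k,i) = (if k = i then (B$$(i,i))^2 else 0)"
        using ut W unfolding upper_triangular_def
        by (cases "k < i"; cases "i < k") (auto simp: power2_eq_square)
    qed
    also have "\<dots> = (\<Sum>i=0..<n. (B$$(i,i))^2)" by simp
    finally show ?thesis .
  qed
  also have "\<dots> = (\<Sum>e\<leftarrow>es. e^2)"
    unfolding dg[symmetric] diag_mat_def using W
    by (simp add: sum_list_sum_nth atLeast0LessThan)
  finally show "tr (A * A) = (\<Sum>e\<leftarrow>es. e^2)" .
qed



lemma cs_list:
  fixes xs :: "real list"
  shows "(sum_list xs)^2 \<le> real (length xs) * (\<Sum>x\<leftarrow>xs. x^2)"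
proof (induction xs)
  case Nil
  then show ?case by simp
next
  case (Cons a xs)
  define S where "S = sum_list xs"
  define Q where "Q = (\<Sum>x\<leftarrow>xs. x^2)"
  define k where "k = real (length xs)"
  have IH: "S^2 \<le> k * Q" using Cons by (simp add: S_def Q_def k_def)
  have Q0: "Q \<ge> 0" unfolding Q_def by (induction xs) auto
  have key: "2 * a * S \<le> k * a^2 + Q"
  proof (cases "k = 0")
    case True
    then have "xs = []" by (simp add: k_def)
    then show ?thesis using Q0 True by (simp add: S_def)
  next
    case False
    then have kp: "k > 0" by (simp add: k_def)
    have "0 \<le> (k * a - S)^2" by simp
    then have "k * (2 * a * S) \<le> k * (k * a^2 + Q)" using IH
      by (simp add: power2_eq_square algebra_simps)
    then show ?thesis using kp by simp
  qed
  have "(sum_list (a # xs))^2 = a^2 + 2 * a * S + S^2" by (simp add: S_def power2_eq_square algebra_simps)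
  also have "\<dots> \<le> (k + 1) * (a^2 + Q)" using key IH by (simp add: algebra_simps)
  finally show ?case by (simp add: k_def Q_def algebra_simps)
qed

lemma cs_sqrt:
  fixes xs :: "real list"
  assumes "(\<Sum>x\<leftarrow>xs. x^2) \<le> B" and "real (length xs) \<le> K"
  shows "sum_list xs \<le> sqrt (K * B)"
proof -
  have B0: "(\<Sum>x\<leftarrow>xs. x^2) \<ge> 0" by (induction xs) auto
  have "(sum_list xs)^2 \<le> K * B"
    using cs_list[of xs] assms B0 by (meson mult_mono of_nat_0_le_iff order_trans)
  then have "sqrt ((sum_list xs)^2) \<le> sqrt (K * B)" by (rule real_sqrt_le_mono)
  then show ?thesis by simp
qed

lemma sym_sum:
  fixes L :: "real list" and f :: "real \<Rightarrow> 'b::comm_monoid_add"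
  assumes "image_mset uminus (mset L) = mset L"
  shows "(\<Sum>x\<leftarrow>L. f (-x)) = (\<Sum>x\<leftarrow>L. f x)"
proof -
  have h: "sum_list (map g L) = sum_mset (image_mset g (mset L))" for g :: "real \<Rightarrow> 'b"
    by (metis mset_map sum_mset_sum_list)
  have "(\<Sum>x\<leftarrow>L. f (-x)) = sum_mset (image_mset f (image_mset uminus (mset L)))"
    unfolding h multiset.map_comp comp_def ..
  also have "\<dots> = (\<Sum>x\<leftarrow>L. f x)" unfolding assms h ..
  finally show ?thesis .
qed

lemma sum_take_le:
  fixes g :: "real \<Rightarrow> real"
  assumes "\<And>x. g x \<ge> 0"
  shows "sum_list (map g (take k L)) \<le> sum_list (map g L)"
    and "sum_list (map g (drop k L)) \<le> sum_list (map g L)"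
proof -
  have "sum_list (map g L) = sum_list (map g (take k L)) + sum_list (map g (drop k L))"
    by (metis append_take_drop_id map_append sum_list_append)
  moreover have "sum_list (map g (take k L)) \<ge> 0" "sum_list (map g (drop k L)) \<ge> 0"
    by (rule sum_list_nonneg, use assms in auto)+
  ultimately show "sum_list (map g (take k L)) \<le> sum_list (map g L)"
    and "sum_list (map g (drop k L)) \<le> sum_list (map g L)" by linarith+
qed

lemma length_filter_sum: "real (length (filter P L)) = (\<Sum>x\<leftarrow>L. if P x then 1 else 0)"
  by (induction L) auto

lemma length_split3: "length (L::real list) = length (filter (\<lambda>x. 0<x) L) + length (filter (\<lambda>x. x<0) L) + length (filter ((=) 0) L)"
  by (induction L) auto

lemma sum_pos_filter: "(\<Sum>x\<leftarrow>L. max x 0) = sum_list (filter (\<lambda>x. 0<x) (L::real list))"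
  by (induction L) auto

lemma sum_pos2_filter: "(\<Sum>x\<leftarrow>L. (max x 0)^2) = (\<Sum>x\<leftarrow>filter (\<lambda>x. 0<x) (L::real list). x^2)"
  by (induction L) auto

lemma sum_list_le_map:
  fixes xs :: "real list" and f g :: "real \<Rightarrow> real"
  assumes "\<And>x. f x \<le> g x"
  shows "sum_list (map f xs) \<le> sum_list (map g xs)"
  using assms by (induction xs) (auto intro: add_mono)

lemma sum_list_neg: "(\<Sum>x\<leftarrow>xs. - x) = - sum_list (xs::real list)"
  by (induction xs) auto

lemma spectral_bound:
  fixes L :: "real list" and m :: nat and k :: nat
  assumes symm: "image_mset uminus (mset L) = mset L"
    and sq: "(\<Sum>x\<leftarrow>L. x^2) \<le> 2 * real m"
    and kn: "k \<le> length L"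
  shows "sum_list (take k L) \<le> sqrt (real k * real m)"
    and "sum_list (take k L) \<le> sqrt (real ((length L - count (mset L) 0) div 2) * real m)"
    and "sum_list (take k L) \<le> sqrt (real (length L - k) * real m)"
proof -
  let ?pos = "\<lambda>x::real. max x 0"
  let ?neg = "\<lambda>x::real. max (-x) 0"
  have sq_split: "(\<Sum>x\<leftarrow>L. x^2) = (\<Sum>x\<leftarrow>L. (?pos x)^2) + (\<Sum>x\<leftarrow>L. (?neg x)^2)"
  proof -
    have "(\<Sum>x\<leftarrow>L. x^2) = (\<Sum>x\<leftarrow>L. (?pos x)^2 + (?neg x)^2)"
      by (intro arg_cong[where f=sum_list] map_cong refl) (auto simp: max_def)
    then show ?thesis by (simp add: sum_list_addf)
  qed
  have pn: "(\<Sum>x\<leftarrow>L. (?neg x)^2) = (\<Sum>x\<leftarrow>L. (?pos x)^2)"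
    using sym_sum[OF symm, of "\<lambda>x. (?pos x)^2"] by simp
  have P2: "(\<Sum>x\<leftarrow>L. (?pos x)^2) \<le> real m" using sq sq_split pn by linarith
  have N2: "(\<Sum>x\<leftarrow>L. (?neg x)^2) \<le> real m" using P2 pn by linarith
  have s_take: "sum_list (take k L) \<le> sum_list (map ?pos (take k L))"
    using sum_list_le_map[of id ?pos "take k L"] by simp
  show "sum_list (take k L) \<le> sqrt (real k * real m)"
  proof -
    have "sum_list (map ?pos (take k L)) \<le> sqrt (real k * real m)"
    proof (rule cs_sqrt)
      have "(\<Sum>x\<leftarrow>map ?pos (take k L). x^2) = (\<Sum>x\<leftarrow>take k L. (?pos x)^2)"
        by (simp add: comp_def)
      also have "\<dots> \<le> (\<Sum>x\<leftarrow>L. (?pos x)^2)" by (rule sum_take_le) simp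
      finally show "(\<Sum>x\<leftarrow>map ?pos (take k L). x^2) \<le> real m" using P2 by linarith
      show "real (length (map ?pos (take k L))) \<le> real k" using kn by simp
    qed
    then show ?thesis using s_take by linarith
  qed
  define F where "F = filter (\<lambda>x. 0<x) L"
  have lenF: "length F = (length L - count (mset L) 0) div 2"
  proof -
    have "real (length (filter (\<lambda>x. x<0) L)) = real (length F)"
      unfolding F_def length_filter_sum using sym_sum[OF symm, of "\<lambda>x. if 0 < x then (1::real) else 0"]
      by simp
    then have "length (filter (\<lambda>x. x<0) L) = length F" by linarith
    moreover have "count (mset L) 0 = length (filter ((=) 0) L)" by (induction L) auto
    ultimately show ?thesis using length_split3[of L] unfolding F_def by simp
  qed
  show "sum_list (take k L) \<le> sqrt (real ((length L - count (mset L) 0) div 2) * real m)"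
  proof -
    have "sum_list (map ?pos (take k L)) \<le> sum_list (map ?pos L)" by (rule sum_take_le) simp
    also have "\<dots> = sum_list F" unfolding F_def by (rule sum_pos_filter)
    also have "\<dots> \<le> sqrt (real ((length L - count (mset L) 0) div 2) * real m)"
    proof (rule cs_sqrt)
      show "(\<Sum>x\<leftarrow>F. x^2) \<le> real m" using P2 unfolding F_def sum_pos2_filter .
      show "real (length F) \<le> real ((length L - count (mset L) 0) div 2)" using lenF by simp
    qed
    finally show ?thesis using s_take by linarith
  qed
  show "sum_list (take k L) \<le> sqrt (real (length L - k) * real m)"
  proof -
    have s0: "sum_list L = 0"
    proof -
      have "(\<Sum>x\<leftarrow>L. - x) = (\<Sum>x\<leftarrow>L. x)" using sym_sum[OF symm, of "\<lambda>x. x"] by simp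
      then have "- sum_list L = sum_list L" by (simp add: sum_list_neg)
      then show ?thesis by linarith
    qed
    have "sum_list L = sum_list (take k L) + sum_list (drop k L)"
      by (metis append_take_drop_id sum_list_append)
    then have "sum_list (take k L) = sum_list (map uminus (drop k L))"
      using s0 by (simp add: sum_list_neg)
    also have "\<dots> \<le> sum_list (map ?neg (drop k L))"
      by (rule sum_list_le_map) simp
    also have "\<dots> \<le> sqrt (real (length L - k) * real m)"
    proof (rule cs_sqrt)
      have "(\<Sum>x\<leftarrow>map ?neg (drop k L). x^2) = (\<Sum>x\<leftarrow>drop k L. (?neg x)^2)"
        by (simp add: comp_def)
      also have "\<dots> \<le> (\<Sum>x\<leftarrow>L. (?neg x)^2)" by (rule sum_take_le) simp
      finally show "(\<Sum>x\<leftarrow>map ?neg (drop k L). x^2) \<le> real m" using N2 by linarith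
      show "real (length (map ?neg (drop k L))) \<le> real (length L - k)" by simp
    qed
    finally show ?thesis .
  qed
qed



lemma adj_carrier: "adj_matrix n E \<in> carrier_mat n n"
  by (simp add: adj_matrix_def)

lemma adj_sym: "simple_graph n E \<Longrightarrow> i < n \<Longrightarrow> j < n \<Longrightarrow> adj_matrix n E $$ (i,j) = adj_matrix n E $$ (j,i)"
  unfolding simple_graph_def adj_matrix_def by auto

lemma card_pairs_le:
  "card {(i,k). i < n \<and> k < n \<and> E i k} \<le> 2 * num_edges n E"
proof -
  let ?S = "{(i,k). i < n \<and> k < n \<and> E i k}"
  let ?S1 = "{(i,k). i < n \<and> k < n \<and> E i k \<and> i \<le> k}"
  let ?S2 = "{(i,k). i < n \<and> k < n \<and> E i k \<and> k < i}"
  let ?U = "{{i, j} | i j. i < n \<and> j < n \<and> E i j}"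
  let ?f = "\<lambda>(i,k). {i,k}::nat set"
  have finU: "finite ?U"
    by (rule finite_subset[of _ "Pow {0..<n}"]) auto
  have fin: "finite ?S1" "finite ?S2"
    by (rule finite_subset[of _ "{0..<n} \<times> {0..<n}"]; auto)+
  have c1: "card ?S1 \<le> card ?U"
  proof (rule card_inj_on_le[OF _ _ finU])
    show "inj_on ?f ?S1" by (auto simp: inj_on_def doubleton_eq_iff)
    show "?f ` ?S1 \<subseteq> ?U" by auto
  qed
  have c2: "card ?S2 \<le> card ?U"
  proof (rule card_inj_on_le[OF _ _ finU])
    show "inj_on ?f ?S2" by (auto simp: inj_on_def doubleton_eq_iff)
    show "?f ` ?S2 \<subseteq> ?U" by auto
  qed
  have "card ?S \<le> card (?S1 \<union> ?S2)"
    by (rule card_mono) (use fin in auto)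
  also have "\<dots> \<le> card ?S1 + card ?S2" by (rule card_Un_le)
  finally show ?thesis using c1 c2 unfolding num_edges_def by linarith
qed

lemma tr_adj: "tr (adj_matrix n E * adj_matrix n E) \<le> 2 * real (num_edges n E)"
proof -
  let ?A = "adj_matrix n E"
  have "tr (?A * ?A) = (\<Sum>i=0..<n. \<Sum>k=0..<n. ?A$$(i,k) * ?A$$(k,i))"
    by (simp add: tr_def scalar_prod_def adj_matrix_def)
  also have "\<dots> \<le> (\<Sum>i=0..<n. \<Sum>k=0..<n. if E i k then 1 else 0)"
    by (intro sum_mono) (auto simp: adj_matrix_def)
  also have "\<dots> = (\<Sum>p\<in>{0..<n}\<times>{0..<n}. if E (fst p) (snd p) then 1 else 0)"
    by (simp add: sum.cartesian_product case_prod_beta)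
  also have "\<dots> = real (card {p\<in>{0..<n}\<times>{0..<n}. E (fst p) (snd p)})"
    by (simp add: sum.If_cases Int_def conj_commute)
  also have "{p\<in>{0..<n}\<times>{0..<n}. E (fst p) (snd p)} = {(i,k). i < n \<and> k < n \<and> E i k}"
    by auto
  finally show ?thesis using card_pairs_le[of n E] by linarith
qed
lemma bip_charpoly:
  assumes "bipartite n E"
  shows "char_poly (- adj_matrix n E) = char_poly (adj_matrix n E)"
proof -
  let ?A = "adj_matrix n E"
  obtain X where X: "\<And>i j. E i j \<Longrightarrow> (i \<in> X \<longleftrightarrow> j \<notin> X)"
    using assms unfolding bipartite_def by blast
  define s where "s i = (if i \<in> X then 1 else -1::real)" for i
  define D where "D = mat n n (\<lambda>(i,j). if i = j then s i else 0)"
  have D: "D \<in> carrier_mat n n" by (simp add: D_def)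
  have ss: "s i * s i = 1" for i by (simp add: s_def)
  have DA: "D * ?A = mat n n (\<lambda>(i,j). s i * ?A$$(i,j))"
  proof (rule eq_matI)
    fix i j assume ij: "i < dim_row (mat n n (\<lambda>(i,j). s i * ?A$$(i,j)))" "j < dim_col (mat n n (\<lambda>(i,j). s i * ?A$$(i,j)))"
    then have "(D * ?A) $$ (i,j) = (\<Sum>k=0..<n. (if i = k then s i else 0) * ?A$$(k,j))"
      by (simp add: D_def adj_matrix_def scalar_prod_def)
    also have "\<dots> = (\<Sum>k=0..<n. if i = k then s i * ?A$$(k,j) else 0)"
      by (intro sum.cong) auto
    also have "\<dots> = s i * ?A$$(i,j)" using ij by simp
    finally show "(D * ?A) $$ (i,j) = mat n n (\<lambda>(i,j). s i * ?A$$(i,j)) $$ (i,j)" using ij by simp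
  qed (auto simp: D_def adj_matrix_def)
  have DAD: "D * ?A * D = - ?A"
  proof (rule eq_matI)
    fix i j assume ij: "i < dim_row (- ?A)" "j < dim_col (- ?A)"
    then have ij': "i < n" "j < n" by (auto simp: adj_matrix_def)
    then have "(D * ?A * D) $$ (i,j) = (\<Sum>k=0..<n. (s i * ?A$$(i,k)) * (if k = j then s k else 0))"
      unfolding DA by (simp add: D_def adj_matrix_def scalar_prod_def)
    also have "\<dots> = (\<Sum>k=0..<n. if k = j then s i * ?A$$(i,j) * s j else 0)"
      by (intro sum.cong) auto
    also have "\<dots> = s i * ?A$$(i,j) * s j" using ij' by simp
    also have "\<dots> = - ?A$$(i,j)"
      using ij' X[of i j] by (auto simp: adj_matrix_def s_def)
    finally show "(D * ?A * D) $$ (i,j) = (- ?A) $$ (i,j)" using ij by simp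
  qed (auto simp: D_def adj_matrix_def)
  have DD: "D * D = 1\<^sub>m n"
  proof (rule eq_matI)
    fix i j assume ij: "i < dim_row (1\<^sub>m n :: real mat)" "j < dim_col (1\<^sub>m n :: real mat)"
    then have "(D * D) $$ (i,j) = (\<Sum>k=0..<n. (if i = k then s i else 0) * (if k = j then s k else 0))"
      by (simp add: D_def scalar_prod_def)
    also have "\<dots> = (\<Sum>k=0..<n. if k = i then (if i = j then 1 else 0) else 0)"
      by (intro sum.cong) (auto simp: ss)
    also have "\<dots> = (1\<^sub>m n :: real mat) $$ (i,j)" using ij by simp
    finally show "(D * D) $$ (i,j) = (1\<^sub>m n :: real mat) $$ (i,j)" .
  qed (auto simp: D_def)
  have "similar_mat_wit (- ?A) ?A D D"
    unfolding similar_mat_wit_def Let_def using D DD DAD adj_carrier[of n E] by auto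
  then show ?thesis by (intro char_poly_similar) (auto simp: similar_mat_def)
qed

theorem theorem4p1:
  fixes n k :: nat and E :: "nat \<Rightarrow> nat \<Rightarrow> bool"
  assumes "simple_graph n E" and "bipartite n E"
    and "1 \<le> k" and "k \<le> n"
  shows "S_k k (adj_matrix n E) \<le>
     (let m = num_edges n E; \<eta> = nullity n E in
      if k \<le> (n - \<eta>) div 2 then sqrt (real k * real m)
      else if k \<le> (n + \<eta>) div 2 then sqrt (real ((n - \<eta>) div 2) * real m)
      else sqrt (real (n - k) * real m))"
proof -
  let ?A = "adj_matrix n E"
  have A: "?A \<in> carrier_mat n n" by (rule adj_carrier)
  obtain es where es: "length es = n" "char_poly ?A = (\<Prod>e\<leftarrow>es. [:-e,1:])"
    using sym_split[OF A adj_sym[OF assms(1)]] by blast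
  have eig: "eig_mset ?A = mset es" by (rule eig_mset_linear[OF es(2)])
  have "(\<Prod>e\<leftarrow>es. [:-e,1:]) = (\<Prod>e\<leftarrow>map uminus es. [:-e,1:])"
    using schur_facts(1)[OF A es(2)] bip_charpoly[OF assms(2)] es(2) by simp
  then have "mset (map uminus es) = mset es"
    by (intro multiset_eqI) (metis order_linear_prod)
  then have symm0: "image_mset uminus (mset es) = mset es" by simp
  have sq0: "(\<Sum>e\<leftarrow>es. e^2) \<le> 2 * real (num_edges n E)"
    using schur_facts(2)[OF A es(2)] tr_adj[of n E] by simp
  define L where "L = eigenvalues_desc ?A"
  have mL: "mset L = mset es" unfolding L_def eigenvalues_desc_def eig by simp
  have lenL: "length L = n" using mL es(1) by (metis size_mset)
  have h: "sum_list (map g xs) = sum_mset (image_mset g (mset xs))" for g :: "real \<Rightarrow> real" and xs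
    by (metis mset_map sum_mset_sum_list)
  have symm: "image_mset uminus (mset L) = mset L" using symm0 mL by simp
  have sq: "(\<Sum>x\<leftarrow>L. x^2) \<le> 2 * real (num_edges n E)" using sq0 unfolding h mL .
  have kn: "k \<le> length L" using lenL assms(4) by simp
  have eta: "nullity n E = count (mset L) 0" unfolding nullity_def eig mL ..
  have Sk: "S_k k ?A = sum_list (take k L)" unfolding S_k_def L_def ..
  note b = spectral_bound[OF symm sq kn, unfolded lenL eta[symmetric]]
  show ?thesis unfolding Let_def Sk using b by simp
qed

end
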